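(* Let $n\ge2$, $1\le p\le\infty$ and $N\ge0$. Then: (i) $\phi_N$ is quasi-homogeneous of degree $N$ on $[0,R]$; (ii) $\phi_{N+1}(t)\le\phi(t)\phi_N(t)$ for every $t\in[0,R]$; (iii) $\phi_N(t)\le\phi(t)^N$ for every $t\in[0,R]$; (iv) the function $\varphi_N(t)=t\,\phi_N(t)$ is a gauge function of order $N+1$ on $[0,R]$.
   Context: $\omega(t)=\left(1+\frac{t}{(n-1)^{1/p}}\right)^{n-1}$ (with $(n-1)^{1/p}=1$ if $p=\infty$) and $\Psi(t)=(1+2t)\omega(t)$ for $t\ge0$; $R$ is the unique positive solution of $\Psi(t)=2$; $\phi(t)=\frac{\omega(t)-1}{1-2t\omega(t)}$ on $[0,R]$. On $[0,R]$ define recursively $\phi_0\equiv1$, $\omega_N(t)=\left(1+\frac{t\phi_N(t)}{(n-1)^{1/p}}\right)^{n-1}$, $\phi_{N+1}(t)=\frac{\omega_N(t)-1}{1-2t\omega_N(t)}$; these are well-defined nondecreasing functions $[0,R]\to[0,1]$. A function $g:J\to\mathbb{R}_+$ on an interval $J\subseteq\mathbb{R}_+$ containing $0$ is quasi-homogeneous of degree $r\ge0$ on $J$ if $g(\lambda t)\le\lambda^r g(t)$ for all $\lambda\in[0,1]$ and $t\in J$. A function $g:J\to J$ is a gauge function of order $r\ge1$ on $J$ if it is quasi-homogeneous of degree $r$ on $J$ and $g(t)\le t$ for all $t\in J$. *)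

theory Defs
  imports "HOL-Analysis.Analysis" "HOL-Library.Extended_Real"
begin

definition rootp :: "nat \<Rightarrow> ereal \<Rightarrow> real" where
  "rootp n p = (if p = \<infinity> then 1 else (real n - 1) powr (1 / real_of_ereal p))"

definition omega :: "nat \<Rightarrow> ereal \<Rightarrow> real \<Rightarrow> real" where
  "omega n p t = (1 + t / rootp n p) ^ (n - 1)"

definition Psi :: "nat \<Rightarrow> ereal \<Rightarrow> real \<Rightarrow> real" where
  "Psi n p t = (1 + 2 * t) * omega n p t"

definition RR :: "nat \<Rightarrow> ereal \<Rightarrow> real" where
  "RR n p = (THE t. t > 0 \<and> Psi n p t = 2)"

definition phi :: "nat \<Rightarrow> ereal \<Rightarrow> real \<Rightarrow> real" where
  "phi n p t = (omega n p t - 1) / (1 - 2 * t * omega n p t)"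

fun phiN :: "nat \<Rightarrow> ereal \<Rightarrow> nat \<Rightarrow> real \<Rightarrow> real" where
  "phiN n p 0 t = 1"
| "phiN n p (Suc N) t =
     (let w = (1 + t * phiN n p N t / rootp n p) ^ (n - 1) in (w - 1) / (1 - 2 * t * w))"

definition rpow :: "real \<Rightarrow> real \<Rightarrow> real" where
  "rpow x r = (if x = 0 then (if r = 0 then 1 else 0) else x powr r)"

definition quasi_homogeneous :: "real set \<Rightarrow> real \<Rightarrow> (real \<Rightarrow> real) \<Rightarrow> bool" where
  "quasi_homogeneous J r g \<longleftrightarrow> 0 \<le> r \<and> (\<forall>t\<in>J. 0 \<le> g t) \<and>
     (\<forall>l\<in>{0..1}. \<forall>t\<in>J. g (l * t) \<le> rpow l r * g t)"

definition gauge_function :: "real set \<Rightarrow> real \<Rightarrow> (real \<Rightarrow> real) \<Rightarrow> bool" where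
  "gauge_function J r g \<longleftrightarrow> 1 \<le> r \<and> (\<forall>t\<in>J. g t \<in> J) \<and>
     quasi_homogeneous J r g \<and> (\<forall>t\<in>J. g t \<le> t)"

end

theory Submission
  imports Defs
begin

lemma rootp_pos:
  assumes "2 \<le> n" "1 \<le> p" shows "0 < rootp n p"
proof (cases "p = \<infinity>")
  case True then show ?thesis by (simp add: rootp_def)
next
  case False
  have "real n - 1 \<ge> 1" using assms by simp
  then show ?thesis using False by (simp add: rootp_def)
qed

lemma conv_pow:
  fixes s y :: real
  assumes "0 \<le> s" "s \<le> 1" "0 \<le> y"
  shows "(1 + s*y)^m - 1 \<le> s * ((1 + y)^m - 1)"
proof (induction m)
  case 0 then show ?case by simp
next
  case (Suc m)
  have sy: "s*y \<le> y" using assms by (simp add: mult_left_le_one_le)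
  have nn: "0 \<le> s * ((1 + y)^m - 1)" using assms by simp
  have "(1 + s*y)^Suc m - 1 = (1 + s*y) * ((1 + s*y)^m - 1) + s*y" by (simp add: algebra_simps)
  also have "\<dots> \<le> (1 + s*y) * (s * ((1 + y)^m - 1)) + s*y"
    using Suc assms by (intro add_right_mono mult_left_mono) auto
  also have "\<dots> \<le> (1 + y) * (s * ((1 + y)^m - 1)) + s*y"
    using sy nn by (intro add_right_mono mult_right_mono) auto
  also have "\<dots> = s * ((1 + y)^Suc m - 1)" by (simp add: algebra_simps)
  finally show ?case .
qed

lemma omega_ge1:
  assumes "2 \<le> n" "1 \<le> p" "0 \<le> t" shows "1 \<le> omega n p t"
  using rootp_pos[OF assms(1,2)] assms(3) unfolding omega_def
  by (intro one_le_power) simp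

lemma omega_gt1:
  assumes "2 \<le> n" "1 \<le> p" "0 < t" shows "1 < omega n p t"
  using rootp_pos[OF assms(1,2)] assms unfolding omega_def
  by (intro one_less_power) auto

lemma Psi_mono:
  assumes "2 \<le> n" "1 \<le> p" "0 \<le> t" "t < s" shows "Psi n p t < Psi n p s"
proof -
  have a: "0 < rootp n p" using rootp_pos assms by auto
  have "omega n p t \<le> omega n p s" unfolding omega_def
    using a assms by (intro power_mono) (auto simp: divide_right_mono)
  moreover have "1 \<le> omega n p t" using omega_ge1 assms by auto
  ultimately have "(1 + 2 * t) * omega n p t < (1 + 2 * s) * omega n p t"
    using assms by auto
  moreover have "(1 + 2 * s) * omega n p t \<le> (1 + 2 * s) * omega n p s"
    using assms \<open>omega n p t \<le> omega n p s\<close> by (intro mult_left_mono) auto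
  ultimately show ?thesis unfolding Psi_def by linarith
qed

lemma RR_props:
  assumes "2 \<le> n" "1 \<le> p"
  shows "0 < RR n p" "Psi n p (RR n p) = 2"
proof -
  have c: "continuous_on {0..1} (Psi n p)" unfolding Psi_def omega_def
    using rootp_pos[OF assms] by (intro continuous_intros) auto
  have "Psi n p 0 \<le> 2" by (simp add: Psi_def omega_def)
  moreover have "2 \<le> Psi n p 1"
    using omega_ge1[OF assms, of 1] by (simp add: Psi_def)
  ultimately obtain x where x: "0 \<le> x" "x \<le> 1" "Psi n p x = 2"
    using IVT'[of "Psi n p" 0 2 1] c by auto
  have "x \<noteq> 0" using x by (auto simp: Psi_def omega_def)
  with x have ex: "x > 0 \<and> Psi n p x = 2" by auto
  have "\<exists>!t. t > 0 \<and> Psi n p t = 2"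
  proof (rule ex1I[of _ x])
    show "x > 0 \<and> Psi n p x = 2" by (rule ex)
    fix y assume y: "y > 0 \<and> Psi n p y = 2"
    show "y = x"
    proof (rule ccontr)
      assume "y \<noteq> x"
      then consider "y < x" | "x < y" by linarith
      then show False
      proof cases
        case 1 then show False using Psi_mono[OF assms, of y x] y ex by simp
      next
        case 2 then show False using Psi_mono[OF assms, of x y] y ex by simp
      qed
    qed
  qed
  from theI'[OF this] show "0 < RR n p" "Psi n p (RR n p) = 2"
    unfolding RR_def by auto
qed

lemma D_pos:
  assumes "2 \<le> n" "1 \<le> p" "0 \<le> t" "t \<le> RR n p"
  shows "0 < 1 - 2*t* omega n p t" "omega n p t - 1 \<le> 1 - 2*t* omega n p t"
proof -
  have "Psi n p t \<le> 2"
  proof (cases "t = RR n p")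
    case True then show ?thesis using RR_props[OF assms(1,2)] by simp
  next
    case False then show ?thesis using Psi_mono[OF assms(1,2,3), of "RR n p"] RR_props[OF assms(1,2)] assms by simp
  qed
  then show le: "omega n p t - 1 \<le> 1 - 2*t* omega n p t" by (simp add: Psi_def algebra_simps)
  show "0 < 1 - 2*t* omega n p t"
  proof (cases "t = 0")
    case True then show ?thesis by simp
  next
    case False then show ?thesis using omega_gt1[OF assms(1,2), of t] assms le by simp
  qed
qed

lemma phiN_Suc':
  "phiN n p (Suc N) t = ((1 + t * phiN n p N t / rootp n p) ^ (n - 1) - 1) /
      (1 - 2 * t * (1 + t * phiN n p N t / rootp n p) ^ (n - 1))"
  by (simp add: Let_def)

lemma phiN_bounds:
  assumes "2 \<le> n" "1 \<le> p" "0 \<le> t" "t \<le> RR n p"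
  shows "0 \<le> phiN n p N t \<and> phiN n p N t \<le> 1"
proof (induction N)
  case 0 then show ?case by simp
next
  case (Suc N)
  define a where "a = rootp n p"
  have a: "0 < a" using rootp_pos assms a_def by auto
  define w where "w = (1 + t * phiN n p N t / a) ^ (n - 1)"
  have w1: "1 \<le> w" unfolding w_def using Suc a assms by (intro one_le_power) simp
  have "t * phiN n p N t \<le> t" using Suc assms by (simp add: mult_right_le_one_le)
  then have wo: "w \<le> omega n p t" unfolding w_def omega_def a_def[symmetric]
    using Suc a assms by (intro power_mono) (auto simp: divide_right_mono)
  have D: "0 < 1 - 2*t* omega n p t" "omega n p t - 1 \<le> 1 - 2*t* omega n p t"
    using D_pos assms by auto
  have dle: "1 - 2*t* omega n p t \<le> 1 - 2*t*w" using wo assms by (simp add: mult_left_mono)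
  have "(w - 1) / (1 - 2*t*w) \<le> (omega n p t - 1) / (1 - 2*t* omega n p t)"
    using w1 wo D dle by (intro frac_le) auto
  also have "\<dots> \<le> 1" using D by simp
  finally have "(w - 1) / (1 - 2*t*w) \<le> 1" .
  moreover have "0 \<le> (w - 1) / (1 - 2*t*w)" using w1 D dle by simp
  ultimately show ?case unfolding phiN_Suc' w_def a_def by simp
qed


lemma phiN_ii:
  assumes "2 \<le> n" "1 \<le> p" "0 \<le> t" "t \<le> RR n p"
  shows "phiN n p (Suc N) t \<le> phi n p t * phiN n p N t"
proof -
  define a where "a = rootp n p"
  have a: "0 < a" using rootp_pos assms a_def by auto
  have B: "0 \<le> phiN n p N t" "phiN n p N t \<le> 1" using phiN_bounds[OF assms] by auto
  define w where "w = (1 + t * phiN n p N t / a) ^ (n - 1)"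
  have w1: "1 \<le> w" unfolding w_def using B a assms by (intro one_le_power) simp
  have "t * phiN n p N t \<le> t" using B assms by (simp add: mult_right_le_one_le)
  then have wo: "w \<le> omega n p t" unfolding w_def omega_def a_def[symmetric]
    using B a assms by (intro power_mono) (auto simp: divide_right_mono)
  have D: "0 < 1 - 2 * t * omega n p t"
    using D_pos assms by auto
  have dle: "1 - 2 * t * omega n p t \<le> 1 - 2 * t * w" using wo assms by (simp add: mult_left_mono)
  have "w - 1 = (1 + phiN n p N t * (t / a)) ^ (n - 1) - 1" unfolding w_def by (simp add: ac_simps)
  also have "\<dots> \<le> phiN n p N t * ((1 + t / a) ^ (n - 1) - 1)"
    using B a assms by (intro conv_pow) auto
  finally have num: "w - 1 \<le> phiN n p N t * (omega n p t - 1)"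
    unfolding omega_def a_def by simp
  have "(w - 1) / (1 - 2 * t * w) \<le> (phiN n p N t * (omega n p t - 1)) / (1 - 2 * t * omega n p t)"
    using w1 num D dle B omega_ge1[OF assms(1-3)] by (intro frac_le) auto
  also have "\<dots> = phi n p t * phiN n p N t" unfolding phi_def by simp
  finally show ?thesis unfolding phiN_Suc' w_def a_def by simp
qed

lemma phiN_i:
  assumes "2 \<le> n" "1 \<le> p"
  shows "\<forall>l t. 0 \<le> l \<longrightarrow> l \<le> 1 \<longrightarrow> 0 \<le> t \<longrightarrow> t \<le> RR n p \<longrightarrow>
           phiN n p N (l * t) \<le> l ^ N * phiN n p N t"
proof (induction N)
  case 0 then show ?case by simp
next
  case (Suc N)
  show ?case
  proof (intro allI impI)
    fix l t :: real
    assume l: "0 \<le> l" "l \<le> 1" and t: "0 \<le> t" "t \<le> RR n p"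
    have "l * t \<le> t" using l t by (simp add: mult_left_le_one_le)
    then have lt: "0 \<le> l * t" "l * t \<le> RR n p" using l t by auto
    define a where "a = rootp n p"
    have a: "0 < a" using rootp_pos assms a_def by auto
    have B: "0 \<le> phiN n p N t" "phiN n p N t \<le> 1" using phiN_bounds[OF assms t] by auto
    have B': "0 \<le> phiN n p N (l*t)" "phiN n p N (l*t) \<le> 1" using phiN_bounds[OF assms lt] by auto
    have IH: "phiN n p N (l * t) \<le> l ^ N * phiN n p N t" using Suc l t by auto
    define y where "y = t * phiN n p N t / a"
    define x where "x = l * t * phiN n p N (l*t) / a"
    have y0: "0 \<le> y" unfolding y_def using a t B by simp
    have x0: "0 \<le> x" unfolding x_def using a t l B' by simp
    have "x \<le> l * t * (l ^ N * phiN n p N t) / a" unfolding x_def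
      using IH a l t by (intro divide_right_mono mult_left_mono) auto
    then have xy: "x \<le> l ^ Suc N * y" unfolding y_def by (simp add: field_simps)
    have lN: "0 \<le> l ^ Suc N" "l ^ Suc N \<le> 1" using l by (auto simp del: power_Suc intro: power_le_one)
    have "l ^ Suc N * y \<le> y" using lN y0 by (simp add: mult_left_le_one_le)
    with xy have xy2: "x \<le> y" by linarith
    define m where "m = n - 1"
    have num: "(1 + x) ^ m - 1 \<le> l ^ Suc N * ((1 + y) ^ m - 1)"
    proof -
      have "(1 + x) ^ m \<le> (1 + l ^ Suc N * y) ^ m" using x0 xy by (intro power_mono) auto
      also have "\<dots> \<le> l ^ Suc N * ((1 + y) ^ m - 1) + 1" using conv_pow[OF lN y0, of m] by simp
      finally show ?thesis by simp
    qed
    have num0: "0 \<le> (1 + x) ^ m - 1" using x0 by (simp add: one_le_power)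
    have yt: "t * phiN n p N t \<le> t" using B t by (simp add: mult_right_le_one_le)
    have wo: "(1 + y) ^ m \<le> omega n p t" unfolding y_def omega_def a_def[symmetric] m_def
      using yt B a t by (intro power_mono) (auto simp: divide_right_mono)
    have D: "0 < 1 - 2 * t * omega n p t" using D_pos assms t by auto
    have d1: "1 - 2 * t * omega n p t \<le> 1 - 2 * t * (1 + y) ^ m" using wo t by (simp add: mult_left_mono)
    have pxy: "(1 + x) ^ m \<le> (1 + y) ^ m" using x0 xy2 by (intro power_mono) auto
    have "l * t * (1 + x) ^ m \<le> t * (1 + y) ^ m"
      using pxy l t x0 by (intro mult_mono) (auto simp: mult_left_le_one_le)
    then have d2: "1 - 2 * t * (1 + y) ^ m \<le> 1 - 2 * (l * t) * (1 + x) ^ m" by simp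
    have "((1 + x) ^ m - 1) / (1 - 2 * (l * t) * (1 + x) ^ m)
        \<le> (l ^ Suc N * ((1 + y) ^ m - 1)) / (1 - 2 * t * (1 + y) ^ m)"
      using num num0 D d1 d2 by (intro frac_le) auto
    also have "\<dots> = l ^ Suc N * (((1 + y) ^ m - 1) / (1 - 2 * t * (1 + y) ^ m))" by simp
    finally show "phiN n p (Suc N) (l * t) \<le> l ^ Suc N * phiN n p (Suc N) t"
      unfolding phiN_Suc' x_def y_def m_def a_def by (simp add: mult.assoc)
  qed
qed

lemma rpow_nat: "0 \<le> l \<Longrightarrow> rpow l (real N) = l ^ N"
  by (auto simp: rpow_def powr_realpow)

theorem lemma2p3:
  fixes n N :: nat and p :: ereal
  assumes "2 \<le> n" and "1 \<le> p"
  shows "quasi_homogeneous {0..RR n p} (real N) (phiN n p N)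
    \<and> (\<forall>t\<in>{0..RR n p}. phiN n p (Suc N) t \<le> phi n p t * phiN n p N t)
    \<and> (\<forall>t\<in>{0..RR n p}. phiN n p N t \<le> phi n p t ^ N)
    \<and> gauge_function {0..RR n p} (real (N + 1)) (\<lambda>t. t * phiN n p N t)"
proof (intro conjI)
  have I: "phiN n p N (l * t) \<le> rpow l (real N) * phiN n p N t"
    if "l \<in> {0..1}" "t \<in> {0..RR n p}" for l t
    using phiN_i[OF assms, of N] that rpow_nat[of l N] by auto
  show "quasi_homogeneous {0..RR n p} (real N) (phiN n p N)"
    unfolding quasi_homogeneous_def using I phiN_bounds[OF assms] by auto
  show ii: "\<forall>t\<in>{0..RR n p}. phiN n p (Suc N) t \<le> phi n p t * phiN n p N t"
    using phiN_ii[OF assms] by auto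
  show "\<forall>t\<in>{0..RR n p}. phiN n p N t \<le> phi n p t ^ N"
  proof
    fix t assume t: "t \<in> {0..RR n p}"
    have ph0: "0 \<le> phi n p t" unfolding phi_def
      using D_pos[OF assms, of t] omega_ge1[OF assms, of t] t by auto
    show "phiN n p N t \<le> phi n p t ^ N"
    proof (induction N)
      case 0 then show ?case by simp
    next
      case (Suc N)
      have "phiN n p (Suc N) t \<le> phi n p t * phiN n p N t" using phiN_ii[OF assms, of t N] t by auto
      also have "\<dots> \<le> phi n p t * phi n p t ^ N" using Suc ph0 by (intro mult_left_mono)
      finally show ?case by simp
    qed
  qed
  show "gauge_function {0..RR n p} (real (N + 1)) (\<lambda>t. t * phiN n p N t)"
    unfolding gauge_function_def quasi_homogeneous_def
  proof (intro conjI ballI)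
    fix t assume t: "t \<in> {0..RR n p}"
    have B: "0 \<le> phiN n p N t" "phiN n p N t \<le> 1" using phiN_bounds[OF assms] t by auto
    then show "t * phiN n p N t \<le> t" "0 \<le> t * phiN n p N t"
      using t by (auto simp: mult_right_le_one_le)
    then show "t * phiN n p N t \<in> {0..RR n p}" using t by auto
  next
    fix l t :: real assume l: "l \<in> {0..1}" and t: "t \<in> {0..RR n p}"
    have "l * t * phiN n p N (l * t) \<le> l * t * (l ^ N * phiN n p N t)"
      using phiN_i[OF assms, of N] l t by (intro mult_left_mono) auto
    then show "l * t * phiN n p N (l * t) \<le> rpow l (real (N + 1)) * (t * phiN n p N t)"
      using rpow_nat[of l "N+1"] l by (simp add: algebra_simps)
  qed auto
qed

end
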